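(* Let $M\ge1$, $K\ge2$ and $n\ge MK$ be integers. For each problem $m\in\{1,\dots,M\}$ let $\nu_1(m),\dots,\nu_K(m)$ be probability distributions supported on $[0,1]$ with means $\mu_1(m)>\mu_2(m)>\cdots>\mu_K(m)$. Let $(J_1,1),\dots,(J_M,M)$ be the arms output by the multi-bandit SAR (Successive Accepts and Rejects) algorithm, described in the context, run with budget $n$. Then the probability of error $$e_n=\mathbb{P}\big(\exists m\in\{1,\dots,M\}: J_m\neq 1\big)$$ satisfies $$e_n\le 2M^2K^2\exp\left(-\frac{n-MK}{8\,\overline{\log}(MK)\,H_2^{[M]}}\right),$$ where $\overline{\log}(MK)=\frac12+\sum_{i=2}^{MK}\frac1i$.
   Context: Multi-bandit model. There are $M$ problems, each with $K$ arms; $(i,m)$ denotes arm $i$ in problem $m$, with unknown distribution $\nu_i(m)$ on $[0,1]$ and mean $\mu_i(m)$. At each round $t=1,\dots,n$ the agent chooses a pair $(I_t,m_t)$ (possibly depending on past observations) and observes a reward drawn from $\nu_{I_t}(m_t)$, independently of the past given the choice. Write $X_{i,s}(m)$ for the $s$-th reward obtained from arm $(i,m)$ and $\widehat\mu_{i,s}(m)=\frac1s\sum_{t=1}^sX_{i,t}(m)$. Gaps and complexity. For each problem $m$, let $\Delta_1(m)=\mu_1(m)-\mu_2(m)$ and $\Delta_i(m)=\mu_1(m)-\mu_i(m)$ for $i\neq1$. Let $\Delta_1^{[M]}\le\Delta_2^{[M]}\le\cdots\le\Delta_{MK}^{[M]}$ be the rearrangement in ascending order of the multiset $\{\Delta_i(m):1\le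 i\le K,\,1\le m\le M\}$, and set $H_2^{[M]}=\max_{k\in\{1,\dots,MK\}}k\,\big(\Delta_k^{[M]}\big)^{-2}$. Multi-bandit SAR algorithm. Let $A_1=\{(i,m):1\le i\le K,1\le m\le M\}$, $\overline{\log}(MK)=\frac12+\sum_{i=2}^{MK}\frac1i$, $n_0=0$, and for $k\in\{1,\dots,MK-1\}$ let $n_k=\left\lceil\frac{1}{\overline{\log}(MK)}\frac{n-MK}{MK+1-k}\right\rceil$. A problem is active at phase $k$ if it has at least one active arm in $A_k$. For each phase $k=1,\dots,MK-1$: (1) For each active pair $(i,m)\in A_k$, pull arm $i$ in problem $m$ exactly $n_k-n_{k-1}$ times. (2) For each active problem $m$, let $h_k(m)$ be an arm with the highest empirical mean $\widehat\mu_{i,n_k}(m)$ among the $i$ with $(i,m)\in A_k$. (3) If there is a problem $m$ such that $h_k(m)$ is the last active arm in problem $m$, then deactivate both the arm and the problem and accept the arm: set $A_{k+1}=A_k\setminus\{(h_k(m),m)\}$ and $J_m=h_k(m)$; in this case skip step (4). (4) Otherwise let $(i_k,m_k)\in\arg\max_{(i,m)\in A_k}\big(\widehat\mu_{h_k(m),n_k}(m)-\widehat\mu_{i,n_k}(m)\big)$ (ties broken arbitrarily) and deactivate it: $A_{k+1}=A_k\setminus\{(i_k,m_k)\}$. Output: the $M$ accepted arms $(J_1,1),\dots,(J_M,M)$, where the last accepted arm is the unique element of $A_{MK}$. *)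

theory Defs
  imports "HOL-Probability.Probability" "HOL-Library.Multiset"
begin

text \<open>Arms are indexed i in {1..K}, problems m in {1..M}; arm 1 is the best arm.
  The randomness is modelled by a reward table: omega (i,m,s) is the s-th reward
  X_{i,s}(m) obtained from arm (i,m), s in {1..n}; the entries are independent with
  law nu i m.  The SAR algorithm is a deterministic function of this table and of
  (arbitrary, deterministic) tie-breaking rules.\<close>

definition logbar :: "nat \<Rightarrow> real" where
  "logbar N = 1/2 + (\<Sum>i=2..N. 1 / real i)"

definition sar_nk :: "nat \<Rightarrow> nat \<Rightarrow> nat \<Rightarrow> nat" where
  "sar_nk N n k = (if k = 0 then 0
     else nat \<lceil>(1 / logbar N) * ((real n - real N) / real (N + 1 - k))\<rceil>)"

definition emp_mean :: "(nat \<times> nat \<times> nat \<Rightarrow> real) \<Rightarrow> nat \<Rightarrow> nat \<Rightarrow> nat \<Rightarrow> real" where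
  "emp_mean \<omega> t i m = (\<Sum>s\<in>{1..t}. \<omega> (i, m, s)) / real t"

text \<open>One phase k of multi-bandit SAR, acting on the state (active set A, accepted arms J).
  tbH k m S: choice of h_k(m) among the empirical maximisers S of problem m;
  tbP k S: choice of the problem among those whose h_k(m) is the last active arm;
  tbR k S: choice of the pair to deactivate among the maximisers of the empirical gap.\<close>
definition sar_step ::
  "nat \<Rightarrow> nat \<Rightarrow> nat \<Rightarrow> (nat \<Rightarrow> nat \<Rightarrow> nat set \<Rightarrow> nat) \<Rightarrow> (nat \<Rightarrow> nat set \<Rightarrow> nat)
   \<Rightarrow> (nat \<Rightarrow> (nat \<times> nat) set \<Rightarrow> nat \<times> nat) \<Rightarrow> (nat \<times> nat \<times> nat \<Rightarrow> real) \<Rightarrow> nat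
   \<Rightarrow> (nat \<times> nat) set \<times> (nat \<Rightarrow> nat) \<Rightarrow> (nat \<times> nat) set \<times> (nat \<Rightarrow> nat)" where
  "sar_step M K n tbH tbP tbR \<omega> k st =
    (let A = fst st; J = snd st;
         t = sar_nk (M * K) n k;
         mu = (\<lambda>i m. emp_mean \<omega> t i m);
         h = (\<lambda>m. tbH k m {i. (i, m) \<in> A \<and> (\<forall>j. (j, m) \<in> A \<longrightarrow> mu j m \<le> mu i m)});
         L = {m. \<exists>i. (i, m) \<in> A \<and> (\<forall>j. (j, m) \<in> A \<longrightarrow> j = i)}
     in if L \<noteq> {} then
          (let m = tbP k L in (A - {(h m, m)}, J(m := h m)))
        else
          (let gap = (\<lambda>p. mu (h (snd p)) (snd p) - mu (fst p) (snd p));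
               r = tbR k {p \<in> A. \<forall>q \<in> A. gap q \<le> gap p}
           in (A - {r}, J)))"

text \<open>State after phases 1..k: sar_state ... k = (A_{k+1}, accepted arms so far).\<close>
fun sar_state ::
  "nat \<Rightarrow> nat \<Rightarrow> nat \<Rightarrow> (nat \<Rightarrow> nat \<Rightarrow> nat set \<Rightarrow> nat) \<Rightarrow> (nat \<Rightarrow> nat set \<Rightarrow> nat)
   \<Rightarrow> (nat \<Rightarrow> (nat \<times> nat) set \<Rightarrow> nat \<times> nat) \<Rightarrow> (nat \<times> nat \<times> nat \<Rightarrow> real) \<Rightarrow> nat
   \<Rightarrow> (nat \<times> nat) set \<times> (nat \<Rightarrow> nat)" where
  "sar_state M K n tbH tbP tbR \<omega> 0 = ({1..K} \<times> {1..M}, (\<lambda>_. 0))"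
| "sar_state M K n tbH tbP tbR \<omega> (Suc k) =
     sar_step M K n tbH tbP tbR \<omega> (Suc k) (sar_state M K n tbH tbP tbR \<omega> k)"

text \<open>Output: J m is the accepted arm of problem m; the last accepted arm is the
  unique element of A_{MK}.\<close>
definition sar_output ::
  "nat \<Rightarrow> nat \<Rightarrow> nat \<Rightarrow> (nat \<Rightarrow> nat \<Rightarrow> nat set \<Rightarrow> nat) \<Rightarrow> (nat \<Rightarrow> nat set \<Rightarrow> nat)
   \<Rightarrow> (nat \<Rightarrow> (nat \<times> nat) set \<Rightarrow> nat \<times> nat) \<Rightarrow> (nat \<times> nat \<times> nat \<Rightarrow> real) \<Rightarrow> nat \<Rightarrow> nat" where
  "sar_output M K n tbH tbP tbR \<omega> =
    (let st = sar_state M K n tbH tbP tbR \<omega> (M * K - 1);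
         p = the_elem (fst st)
     in (snd st)(snd p := fst p))"

definition reward_space :: "nat \<Rightarrow> nat \<Rightarrow> nat \<Rightarrow> (nat \<Rightarrow> nat \<Rightarrow> real measure)
    \<Rightarrow> (nat \<times> nat \<times> nat \<Rightarrow> real) measure" where
  "reward_space M K n \<nu> = PiM ({1..K} \<times> {1..M} \<times> {1..n}) (\<lambda>(i, m, s). \<nu> i m)"

definition arm_mean :: "(nat \<Rightarrow> nat \<Rightarrow> real measure) \<Rightarrow> nat \<Rightarrow> nat \<Rightarrow> real" where
  "arm_mean \<nu> i m = integral\<^sup>L (\<nu> i m) (\<lambda>x. x)"

definition gap :: "(nat \<Rightarrow> nat \<Rightarrow> real measure) \<Rightarrow> nat \<Rightarrow> nat \<Rightarrow> real" where
  "gap \<nu> i m = (if i = 1 then arm_mean \<nu> 1 m - arm_mean \<nu> 2 m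
                else arm_mean \<nu> 1 m - arm_mean \<nu> i m)"

text \<open>Sorted gaps Delta_1^[M] <= ... <= Delta_{MK}^[M] (as a 0-indexed list) and H_2^[M].\<close>
definition sorted_gaps :: "(nat \<Rightarrow> nat \<Rightarrow> real measure) \<Rightarrow> nat \<Rightarrow> nat \<Rightarrow> real list" where
  "sorted_gaps \<nu> M K = sorted_list_of_multiset
     (image_mset (\<lambda>p. gap \<nu> (fst p) (snd p)) (mset_set ({1..K} \<times> {1..M})))"

definition H2 :: "(nat \<Rightarrow> nat \<Rightarrow> real measure) \<Rightarrow> nat \<Rightarrow> nat \<Rightarrow> real" where
  "H2 \<nu> M K = Max ((\<lambda>k. real k / (sorted_gaps \<nu> M K ! (k - 1))\<^sup>2) ` {1..M * K})"

end

theory Submission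
  imports Defs
begin


lemma filter_mset_mset_set':
  "finite B \<Longrightarrow> filter_mset P (mset_set B) = mset_set {x\<in>B. P x}"
proof (induction B rule: finite_induct)
  case empty then show ?case by simp
next
  case (insert x F)
  have "{y\<in>insert x F. P y} = (if P x then insert x {y\<in>F. P y} else {y\<in>F. P y})" by auto
  then show ?case using insert by auto
qed

lemma sorted_filter_less_len:
  fixes xs :: "real list"
  assumes "sorted xs" "c \<ge> 1" "c \<le> length xs"
  shows "length (filter (\<lambda>x. x < xs!(c-1)) xs) \<le> c - 1"
proof -
  let ?P = "\<lambda>x. x < xs!(c-1)"
  have d: "filter ?P (drop (c-1) xs) = []"
  proof (rule filter_False, rule ballI)
    fix x assume "x \<in> set (drop (c-1) xs)"
    then obtain j where j: "j < length (drop (c-1) xs)" "x = drop (c-1) xs ! j"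
      by (auto simp: in_set_conv_nth)
    then have "x = xs ! (c - 1 + j)" using assms by simp
    moreover have "xs!(c-1) \<le> xs ! (c-1+j)"
      using j assms by (intro sorted_nth_mono) auto
    ultimately show "\<not> ?P x" by simp
  qed
  have "filter ?P xs = filter ?P (take (c-1) xs) @ filter ?P (drop (c-1) xs)"
    by (metis append_take_drop_id filter_append)
  then have "length (filter ?P xs) = length (filter ?P (take (c-1) xs))" using d by simp
  also have "\<dots> \<le> length (take (c-1) xs)" by (rule length_filter_le)
  also have "\<dots> \<le> c - 1" by simp
  finally show ?thesis .
qed

lemma exists_big:
  fixes g :: "'a \<Rightarrow> real"
  assumes "finite B" "A \<subseteq> B" "A \<noteq> {}"
  shows "\<exists>p\<in>A. g p \<ge> sorted_list_of_multiset (image_mset g (mset_set B)) ! (card A - 1)"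
proof (rule ccontr)
  let ?xs = "sorted_list_of_multiset (image_mset g (mset_set B))"
  let ?v = "?xs ! (card A - 1)"
  assume "\<not> ?thesis"
  then have lt: "\<forall>p\<in>A. g p < ?v" by auto
  have fA: "finite A" using assms finite_subset by blast
  have cA: "card A \<ge> 1" using fA assms by (simp add: Suc_le_eq card_gt_0_iff)
  have len: "length ?xs = card B"
    by (metis mset_sorted_list_of_multiset size_image_mset size_mset size_mset_set)
  have cAB: "card A \<le> card B" using assms card_mono by blast
  have "length (filter (\<lambda>x. x < ?v) ?xs) = size (filter_mset (\<lambda>x. x < ?v) (mset ?xs))"
    by (metis mset_filter size_mset)
  also have "\<dots> = size (filter_mset (\<lambda>x. x < ?v) (image_mset g (mset_set B)))"
    by simp
  also have "\<dots> = card {p\<in>B. g p < ?v}"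
    using assms(1) by (simp add: filter_mset_image_mset filter_mset_mset_set')
  finally have eq: "length (filter (\<lambda>x. x < ?v) ?xs) = card {p\<in>B. g p < ?v}" .
  have "card A \<le> card {p\<in>B. g p < ?v}"
    using lt assms by (intro card_mono) auto
  moreover have "length (filter (\<lambda>x. x < ?v) ?xs) \<le> card A - 1"
    using sorted_filter_less_len[of ?xs "card A"] cA cAB len
    by (simp add: sorted_sorted_list_of_multiset)
  ultimately show False using eq cA by linarith
qed



lemma argmax_ex:
  fixes f :: "'a \<Rightarrow> real"
  assumes "finite X" "X \<noteq> {}"
  shows "\<exists>i\<in>X. \<forall>j\<in>X. f j \<le> f i"
proof -
  have "Max (f ` X) \<in> f ` X" using assms by simp
  then obtain i where "i \<in> X" "f i = Max (f ` X)" by auto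
  then show ?thesis using assms by (metis Max_ge finite_imageI image_eqI)
qed

lemma step_inv:
  fixes A :: "(nat \<times> nat) set" and J :: "nat \<Rightarrow> nat"
  assumes K2: "K \<ge> 2"
    and means: "\<forall>m\<in>{1..M}. \<forall>i j. 1 \<le> i \<longrightarrow> i < j \<longrightarrow> j \<le> K \<longrightarrow> arm_mean \<nu> j m < arm_mean \<nu> i m"
    and tH: "\<forall>k m S. finite S \<longrightarrow> S \<noteq> {} \<longrightarrow> tbH k m S \<in> S"
    and tP: "\<forall>k S. finite S \<longrightarrow> S \<noteq> {} \<longrightarrow> tbP k S \<in> S"
    and tR: "\<forall>k S. finite S \<longrightarrow> S \<noteq> {} \<longrightarrow> tbR k S \<in> S"
    and AB: "A \<subseteq> {1..K} \<times> {1..M}"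
    and cA: "card A \<ge> 2"
    and inv: "\<forall>m\<in>{1..M}. if (\<exists>i. (i,m)\<in>A) then (1,m)\<in>A else J m = 1"
    and good: "\<forall>i\<in>{1..K}. \<forall>m\<in>{1..M}. \<bar>emp_mean \<omega> (sar_nk (M*K) n k) i m - arm_mean \<nu> i m\<bar>
                   < sorted_gaps \<nu> M K ! (card A - 1) / 4"
    and st'_def: "st' = sar_step M K n tbH tbP tbR \<omega> k (A,J)"
  shows "fst st' \<subseteq> A \<and> card (fst st') = card A - 1 \<and>
         (\<forall>m\<in>{1..M}. if (\<exists>i. (i,m)\<in>fst st') then (1,m)\<in>fst st' else snd st' m = 1)"
proof -
  define mu where "mu = (\<lambda>i m. emp_mean \<omega> (sar_nk (M * K) n k) i m)"
  define Hs where "Hs = (\<lambda>m. {i. (i, m) \<in> A \<and> (\<forall>j. (j, m) \<in> A \<longrightarrow> mu j m \<le> mu i m)})"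
  define h where "h = (\<lambda>m. tbH k m (Hs m))"
  define L where "L = {m. \<exists>i. (i, m) \<in> A \<and> (\<forall>j. (j, m) \<in> A \<longrightarrow> j = i)}"
  define g where "g = (\<lambda>p. mu (h (snd p)) (snd p) - mu (fst p) (snd p))"
  define S where "S = {p \<in> A. \<forall>q \<in> A. g q \<le> g p}"
  have st_eq: "st' = (if L \<noteq> {} then (A - {(h (tbP k L), tbP k L)}, J(tbP k L := h (tbP k L)))
                      else (A - {tbR k S}, J))"
    unfolding st'_def sar_step_def Let_def mu_def Hs_def h_def L_def g_def S_def fst_conv snd_conv by (rule refl)
  have finA: "finite A" using finite_subset[OF AB] by simp
  have hmem: "h m \<in> Hs m" if im: "(i, m) \<in> A" for i m
  proof -
    have fX: "finite {i. (i,m)\<in>A}"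
      by (rule finite_subset[OF _ finite_imageI[OF finA, of fst]]) force
    have neX: "{i. (i,m)\<in>A} \<noteq> {}" using im by blast
    obtain i0 where i0: "i0 \<in> {i. (i,m)\<in>A}" "\<forall>j\<in>{i. (i,m)\<in>A}. mu j m \<le> mu i0 m"
      using argmax_ex[OF fX neX, of "\<lambda>i. mu i m"] by blast
    have ne: "Hs m \<noteq> {}" using i0 unfolding Hs_def by auto
    have fH: "finite (Hs m)" using fX unfolding Hs_def by (rule rev_finite_subset) auto
    have "tbH k m (Hs m) \<in> Hs m" using tH fH ne by simp
    then show ?thesis unfolding h_def .
  qed
  show ?thesis
  proof (cases "L \<noteq> {}")
    case True
    define m0 where "m0 = tbP k L"
    have Lsub: "L \<subseteq> snd ` A"
    proof
      fix m assume "m \<in> L"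
      then obtain i where "(i, m) \<in> A" unfolding L_def by blast
      then show "m \<in> snd ` A" by (metis image_eqI snd_conv)
    qed
    have finL: "finite L" using finite_subset[OF Lsub] finA by simp
    have m0L: "m0 \<in> L" using tP finL True unfolding m0_def by simp
    then obtain i0 where i0: "(i0, m0) \<in> A" "\<forall>j. (j, m0) \<in> A \<longrightarrow> j = i0"
      unfolding L_def by blast
    have m0M: "m0 \<in> {1..M}" using subsetD[OF AB i0(1)] by simp
    have "if (\<exists>i. (i,m0)\<in>A) then (1,m0)\<in>A else J m0 = 1" using bspec[OF inv m0M] .
    moreover have ex0: "\<exists>i. (i,m0)\<in>A" using i0(1) by blast
    ultimately have A1: "(1, m0) \<in> A" by (simp only: if_P[OF ex0])
    then have i01: "i0 = 1" using i0(2) by blast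
    have "h m0 \<in> Hs m0" using hmem[OF i0(1)] .
    then have "(h m0, m0) \<in> A" unfolding Hs_def by blast
    then have hm0: "h m0 = 1" using i0(2) i01 by blast
    have st: "st' = (A - {(1, m0)}, J(m0 := 1))" using st_eq True hm0 unfolding m0_def by simp
    show ?thesis
    proof (intro conjI)
      show "fst st' \<subseteq> A" using st by auto
      show "card (fst st') = card A - 1" using st A1 finA by simp
      show "\<forall>m\<in>{1..M}. if (\<exists>i. (i,m)\<in>fst st') then (1,m)\<in>fst st' else snd st' m = 1"
      proof
        fix m assume mM: "m \<in> {1..M}"
        show "if (\<exists>i. (i,m)\<in>fst st') then (1,m)\<in>fst st' else snd st' m = 1"
        proof (cases "m = m0")
          case True
          have "\<not> (\<exists>i. (i,m)\<in>fst st')"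
          proof
            assume "\<exists>i. (i,m)\<in>fst st'"
            then obtain i where "(i, m0) \<in> A - {(1,m0)}" using st True by auto
            then show False using i0(2) i01 by auto
          qed
          then show ?thesis using st True by simp
        next
          case False
          have "if (\<exists>i. (i,m)\<in>A) then (1,m)\<in>A else J m = 1" using bspec[OF inv mM] .
          moreover have "(\<exists>i. (i,m)\<in>fst st') = (\<exists>i. (i,m)\<in>A)" using st False by auto
          ultimately show ?thesis using st False by (auto split: if_split_asm)
        qed
      qed
    qed
  next
    case False
    then have L0: "L = {}" by simp
    obtain p0 where p0: "p0 \<in> A" "\<forall>q\<in>A. g q \<le> g p0"
      using argmax_ex[OF finA, of g] cA by fastforce
    have "p0 \<in> S" using p0 unfolding S_def by blast
    then have Sne: "S \<noteq> {}" by blast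
    have Sfin: "finite S" using finA unfolding S_def by simp
    define r where "r = tbR k S"
    have rS: "r \<in> S" using tR Sne Sfin unfolding r_def by blast
    have st: "st' = (A - {r}, J)" using st_eq L0 unfolding r_def by simp
    have rA: "r \<in> A" using rS unfolding S_def by blast
    define D where "D = sorted_gaps \<nu> M K ! (card A - 1)"
    let ?mu = "arm_mean \<nu>"
    have mu_le: "?mu i m \<le> ?mu 1 m" if "i \<in> {1..K}" "m \<in> {1..M}" for i m
    proof (cases "i = 1")
      case True then show ?thesis by simp
    next
      case False
      then have "1 \<le> (1::nat)" "1 < i" "i \<le> K" using that by auto
      then have "?mu i m < ?mu 1 m" using means that(2) by blast
      then show ?thesis by simp
    qed
    have two: "\<exists>j. j \<noteq> 1 \<and> (j, m) \<in> A" if "(1, m) \<in> A" for m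
      using L0 that unfolding L_def by blast
    have act1: "(1, m) \<in> A" if "(i, m) \<in> A" for i m
    proof -
      have mM: "m \<in> {1..M}" using subsetD[OF AB that] by simp
      have "if (\<exists>i. (i,m)\<in>A) then (1,m)\<in>A else J m = 1" using bspec[OF inv mM] .
      moreover have ex: "\<exists>i. (i,m)\<in>A" using that by blast
      ultimately show ?thesis by (simp only: if_P[OF ex])
    qed
    have r1: "fst r \<noteq> 1"
    proof
      assume fr: "fst r = 1"
      define m where "m = snd r"
      have r_eq: "r = (1, m)" using fr unfolding m_def by (metis prod.collapse)
      have Ane: "A \<noteq> {}" using cA by auto
      obtain p where pA: "p \<in> A" and pg: "gap \<nu> (fst p) (snd p) \<ge> D"
        using exists_big[OF _ AB Ane, of "\<lambda>p. gap \<nu> (fst p) (snd p)"]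
        unfolding D_def sorted_gaps_def by auto
      have "\<exists>j m'. (j, m') \<in> A \<and> j \<noteq> 1 \<and> gap \<nu> j m' \<ge> D"
      proof (cases "fst p = 1")
        case False
        then show ?thesis using pA pg by (metis prod.collapse)
      next
        case True
        define m' where "m' = snd p"
        have p1: "(1, m') \<in> A" using pA True unfolding m'_def by (metis prod.collapse)
        obtain j where j: "j \<noteq> 1" "(j, m') \<in> A" using two[OF p1] by blast
        have jK: "j \<in> {1..K}" "m' \<in> {1..M}" using subsetD[OF AB j(2)] by auto
        have "?mu j m' \<le> ?mu 2 m'"
        proof (cases "j = 2")
          case True then show ?thesis by simp
        next
          case False
          then have "1 \<le> (2::nat)" "2 < j" "j \<le> K" using jK j(1) by auto
          then have "?mu j m' < ?mu 2 m'" using means jK(2) by blast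
          then show ?thesis by simp
        qed
        then have "gap \<nu> j m' \<ge> gap \<nu> 1 m'" using j(1) unfolding gap_def by simp
        moreover have "gap \<nu> 1 m' \<ge> D" using pg True unfolding m'_def by simp
        ultimately show ?thesis using j by force
      qed
      then obtain j m' where q: "(j, m') \<in> A" "j \<noteq> 1" "gap \<nu> j m' \<ge> D" by blast
      have rA1: "(1, m) \<in> A" using rA r_eq by simp
      have q1: "(1, m') \<in> A" using act1[OF q(1)] .
      have jm: "j \<in> {1..K}" "m' \<in> {1..M}" using subsetD[OF AB q(1)] by auto
      have mM: "m \<in> {1..M}" using subsetD[OF AB rA1] by auto
      have "h m \<in> Hs m" using hmem[OF rA1] .
      then have hmA: "(h m, m) \<in> A" unfolding Hs_def by blast
      have hK: "h m \<in> {1..K}" using subsetD[OF AB hmA] by auto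
      have "h m' \<in> Hs m'" using hmem[OF q(1)] .
      then have hm'ge: "mu 1 m' \<le> mu (h m') m'" unfolding Hs_def using q1 by blast
      have K1: "(1::nat) \<in> {1..K}" using K2 by simp
      have e1: "\<bar>mu j m' - ?mu j m'\<bar> < D/4" using good jm unfolding mu_def D_def by blast
      have e2: "\<bar>mu 1 m' - ?mu 1 m'\<bar> < D/4" using good jm K1 unfolding mu_def D_def by blast
      have e3: "\<bar>mu 1 m - ?mu 1 m\<bar> < D/4" using good mM K1 unfolding mu_def D_def by blast
      have e4: "\<bar>mu (h m) m - ?mu (h m) m\<bar> < D/4" using good mM hK unfolding mu_def D_def by blast
      have le4: "?mu (h m) m \<le> ?mu 1 m" using mu_le[OF hK mM] .
      have gq: "gap \<nu> j m' = ?mu 1 m' - ?mu j m'" using q(2) unfolding gap_def by simp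
      have "g (j, m') \<le> g r" using rS q(1) unfolding S_def by blast
      then have "mu (h m') m' - mu j m' \<le> mu (h m) m - mu 1 m" unfolding g_def r_eq by simp
      then show False using e1 e2 e3 e4 le4 gq q(3) hm'ge unfolding abs_less_iff by linarith
    qed
    show ?thesis
    proof (intro conjI)
      show "fst st' \<subseteq> A" using st by auto
      show "card (fst st') = card A - 1" using st rA finA by simp
      show "\<forall>m\<in>{1..M}. if (\<exists>i. (i,m)\<in>fst st') then (1,m)\<in>fst st' else snd st' m = 1"
      proof
        fix m assume mM: "m \<in> {1..M}"
        show "if (\<exists>i. (i,m)\<in>fst st') then (1,m)\<in>fst st' else snd st' m = 1"
        proof (cases "\<exists>i. (i,m)\<in>A")
          case True
          then obtain i where "(i,m)\<in>A" by blast
          then have "(1,m) \<in> A" by (rule act1)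
          moreover have "(1,m) \<noteq> r" using r1 by auto
          ultimately have "(1,m) \<in> fst st'" using st by simp
          then have ex: "\<exists>i. (i,m)\<in>fst st'" by blast
          show ?thesis by (simp only: if_P[OF ex]) fact
        next
          case False
          have "if (\<exists>i. (i,m)\<in>A) then (1,m)\<in>A else J m = 1" using bspec[OF inv mM] .
          then have "J m = 1" by (simp only: if_not_P[OF False])
          moreover have nex: "\<not> (\<exists>i. (i,m)\<in>fst st')" using False st by auto
          ultimately show ?thesis using st by auto
        qed
      qed
    qed
  qed
qed



lemma state_inv:
  fixes M K n :: nat
  assumes M1: "M \<ge> 1" and K2: "K \<ge> 2"
    and means: "\<forall>m\<in>{1..M}. \<forall>i j. 1 \<le> i \<longrightarrow> i < j \<longrightarrow> j \<le> K \<longrightarrow> arm_mean \<nu> j m < arm_mean \<nu> i m"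
    and tH: "\<forall>k m S. finite S \<longrightarrow> S \<noteq> {} \<longrightarrow> tbH k m S \<in> S"
    and tP: "\<forall>k S. finite S \<longrightarrow> S \<noteq> {} \<longrightarrow> tbP k S \<in> S"
    and tR: "\<forall>k S. finite S \<longrightarrow> S \<noteq> {} \<longrightarrow> tbR k S \<in> S"
    and good: "\<forall>k\<in>{1..M*K-1}. \<forall>i\<in>{1..K}. \<forall>m\<in>{1..M}.
        \<bar>emp_mean \<omega> (sar_nk (M*K) n k) i m - arm_mean \<nu> i m\<bar> < sorted_gaps \<nu> M K ! (M*K - k) / 4"
  shows "k \<le> M*K - 1 \<Longrightarrow> fst (sar_state M K n tbH tbP tbR \<omega> k) \<subseteq> {1..K} \<times> {1..M}
     \<and> card (fst (sar_state M K n tbH tbP tbR \<omega> k)) = M*K - k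
     \<and> (\<forall>m\<in>{1..M}. if (\<exists>i. (i,m)\<in>fst (sar_state M K n tbH tbP tbR \<omega> k))
            then (1,m)\<in>fst (sar_state M K n tbH tbP tbR \<omega> k)
            else snd (sar_state M K n tbH tbP tbR \<omega> k) m = 1)"
proof (induction k)
  case 0
  have "\<forall>m\<in>{1..M}. (1,m) \<in> {1..K} \<times> {1..M}" using K2 by auto
  then show ?case by auto
next
  case (Suc k)
  define A where "A = fst (sar_state M K n tbH tbP tbR \<omega> k)"
  define J where "J = snd (sar_state M K n tbH tbP tbR \<omega> k)"
  have IH: "A \<subseteq> {1..K} \<times> {1..M} \<and> card A = M*K - k \<and>
     (\<forall>m\<in>{1..M}. if (\<exists>i. (i,m)\<in>A) then (1,m)\<in>A else J m = 1)"
  proof -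
    have "k \<le> M*K - 1" using Suc.prems by simp
    from Suc.IH[OF this] show ?thesis unfolding A_def J_def .
  qed
  have cA: "card A \<ge> 2" using IH Suc.prems by simp
  have st: "sar_state M K n tbH tbP tbR \<omega> (Suc k) = sar_step M K n tbH tbP tbR \<omega> (Suc k) (A, J)"
    unfolding A_def J_def by simp
  have k1: "Suc k \<in> {1..M*K-1}" using Suc.prems by simp
  have idx: "M*K - Suc k = card A - 1" using IH by simp
  have g: "\<forall>i\<in>{1..K}. \<forall>m\<in>{1..M}. \<bar>emp_mean \<omega> (sar_nk (M*K) n (Suc k)) i m - arm_mean \<nu> i m\<bar>
                   < sorted_gaps \<nu> M K ! (card A - 1) / 4"
    using bspec[OF good k1] unfolding idx .
  have "fst (sar_step M K n tbH tbP tbR \<omega> (Suc k) (A, J)) \<subseteq> A \<and>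
        card (fst (sar_step M K n tbH tbP tbR \<omega> (Suc k) (A, J))) = card A - 1 \<and>
        (\<forall>m\<in>{1..M}. if (\<exists>i. (i,m)\<in>fst (sar_step M K n tbH tbP tbR \<omega> (Suc k) (A, J)))
           then (1,m)\<in>fst (sar_step M K n tbH tbP tbR \<omega> (Suc k) (A, J))
           else snd (sar_step M K n tbH tbP tbR \<omega> (Suc k) (A, J)) m = 1)"
    by (rule step_inv[OF K2 means tH tP tR IH[THEN conjunct1] cA IH[THEN conjunct2, THEN conjunct2] g refl])
  note R = this
  have S1: "fst (sar_step M K n tbH tbP tbR \<omega> (Suc k) (A, J)) \<subseteq> {1..K} \<times> {1..M}"
    using R IH by blast
  have S2: "card (fst (sar_step M K n tbH tbP tbR \<omega> (Suc k) (A, J))) = M*K - Suc k"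
    using R IH by simp
  show ?case unfolding st using S1 S2 R[THEN conjunct2, THEN conjunct2] by blast
qed

lemma det:
  fixes M K n :: nat
  assumes M1: "M \<ge> 1" and K2: "K \<ge> 2"
    and means: "\<forall>m\<in>{1..M}. \<forall>i j. 1 \<le> i \<longrightarrow> i < j \<longrightarrow> j \<le> K \<longrightarrow> arm_mean \<nu> j m < arm_mean \<nu> i m"
    and tH: "\<forall>k m S. finite S \<longrightarrow> S \<noteq> {} \<longrightarrow> tbH k m S \<in> S"
    and tP: "\<forall>k S. finite S \<longrightarrow> S \<noteq> {} \<longrightarrow> tbP k S \<in> S"
    and tR: "\<forall>k S. finite S \<longrightarrow> S \<noteq> {} \<longrightarrow> tbR k S \<in> S"
    and good: "\<forall>k\<in>{1..M*K-1}. \<forall>i\<in>{1..K}. \<forall>m\<in>{1..M}.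
        \<bar>emp_mean \<omega> (sar_nk (M*K) n k) i m - arm_mean \<nu> i m\<bar> < sorted_gaps \<nu> M K ! (M*K - k) / 4"
    and mM: "m \<in> {1..M}"
  shows "sar_output M K n tbH tbP tbR \<omega> m = 1"
proof -
  define st where "st = sar_state M K n tbH tbP tbR \<omega> (M * K - 1)"
  have I: "fst st \<subseteq> {1..K} \<times> {1..M} \<and> card (fst st) = M*K - (M*K-1) \<and>
     (\<forall>m\<in>{1..M}. if (\<exists>i. (i,m)\<in>fst st) then (1,m)\<in>fst st else snd st m = 1)"
    unfolding st_def by (rule state_inv[OF M1 K2 means tH tP tR good]) simp
  have N1: "M * K \<ge> 1" using M1 K2 by (simp add: Suc_le_eq)
  have "card (fst st) = 1" using I N1 by simp
  then obtain p where p: "fst st = {p}" by (auto simp: card_Suc_eq)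
  have out: "sar_output M K n tbH tbP tbR \<omega> = (snd st)(snd p := fst p)"
    unfolding sar_output_def Let_def st_def[symmetric] p by simp
  have Im: "if (\<exists>i. (i,m)\<in>fst st) then (1,m)\<in>fst st else snd st m = 1" using I mM by blast
  show ?thesis
  proof (cases "m = snd p")
    case True
    have ex: "\<exists>i. (i,m)\<in>fst st" using True p by (metis prod.collapse singletonI)
    have "(1, m) \<in> fst st" using Im by (simp only: if_P[OF ex])
    then have "p = (1, m)" using p by simp
    then have fp: "fst p = 1" by (metis fst_conv)
    then show ?thesis using out True by simp
  next
    case False
    have nex: "\<not> (\<exists>i. (i,m)\<in>fst st)" using False p by auto
    have "snd st m = 1" using Im by (simp only: if_not_P[OF nex])
    then show ?thesis using out False by simp
  qed
qed



lemma comp_meas: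
  assumes ass: "\<forall>i\<in>{1..K}. \<forall>m\<in>{1..M}. prob_space (\<nu> i m) \<and> sets (\<nu> i m) = sets borel
           \<and> (AE x in \<nu> i m. x \<in> {0..1})"
  shows "(\<lambda>\<omega>. \<omega> x) \<in> borel_measurable (reward_space M K n \<nu>)"
proof (cases "x \<in> {1..K} \<times> {1..M} \<times> {1..n}")
  case True
  obtain i m s where x: "x = (i, m, s)" by (cases x)
  have im: "i \<in> {1..K}" "m \<in> {1..M}" using True unfolding x by auto
  have sx: "sets (\<nu> i m) = sets borel" using bspec[OF bspec[OF ass im(1)] im(2)] by (rule conjunct1[OF conjunct2])
  have "(\<lambda>\<omega>. \<omega> x) \<in> measurable (reward_space M K n \<nu>) ((\<lambda>(i, m, s). \<nu> i m) x)"
    unfolding reward_space_def by (rule measurable_component_singleton[OF True])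
  then have "(\<lambda>\<omega>. \<omega> x) \<in> measurable (reward_space M K n \<nu>) (\<nu> i m)" unfolding x by (simp only: split_conv)
  then show ?thesis unfolding measurable_cong_sets[of "reward_space M K n \<nu>" "reward_space M K n \<nu>", OF refl sx] .
next
  case False
  have und: "\<omega> x = undefined" if "\<omega> \<in> space (reward_space M K n \<nu>)" for \<omega>
  proof -
    have "\<omega> \<in> PiE ({1..K} \<times> {1..M} \<times> {1..n}) (\<lambda>x. space ((\<lambda>(i, m, s). \<nu> i m) x))"
      using that unfolding reward_space_def space_PiM .
    then show ?thesis using False by (rule PiE_arb)
  qed
  have "(\<lambda>_. undefined) \<in> borel_measurable (reward_space M K n \<nu>)" by simp
  then show ?thesis using measurable_cong[of "reward_space M K n \<nu>" "\<lambda>\<omega>. \<omega> x" "\<lambda>_. undefined" borel] und by blast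
qed

lemma emp_meas:
  assumes ass: "\<forall>i\<in>{1..K}. \<forall>m\<in>{1..M}. prob_space (\<nu> i m) \<and> sets (\<nu> i m) = sets borel
           \<and> (AE x in \<nu> i m. x \<in> {0..1})"
  shows "(\<lambda>\<omega>. emp_mean \<omega> t i m) \<in> borel_measurable (reward_space M K n \<nu>)"
  unfolding emp_mean_def
  by (intro borel_measurable_divide borel_measurable_sum comp_meas[OF ass] measurable_const) simp_all

lemma hoeff_arm:
  assumes ass: "\<forall>i\<in>{1..K}. \<forall>m\<in>{1..M}. prob_space (\<nu> i m) \<and> sets (\<nu> i m) = sets borel
           \<and> (AE x in \<nu> i m. x \<in> {0..1})"
    and im: "i \<in> {1..K}" "m \<in> {1..M}" and t: "1 \<le> t" "t \<le> n" and e: "\<epsilon> \<ge> 0"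
  shows "measure (reward_space M K n \<nu>)
     {\<omega> \<in> space (reward_space M K n \<nu>). \<epsilon> \<le> \<bar>emp_mean \<omega> t i m - arm_mean \<nu> i m\<bar>}
     \<le> 2 * exp (-2 * real t * \<epsilon>\<^sup>2)"
proof -
  define I where "I = {1..K} \<times> {1..M} \<times> {1..n}"
  define F' where "F' = (\<lambda>x. if x \<in> I then (case x of (i, m, s) \<Rightarrow> \<nu> i m) else return borel (0::real))"
  define P where "P = reward_space M K n \<nu>"
  have PF: "P = PiM I F'"
    unfolding P_def reward_space_def I_def F'_def by (rule PiM_cong) auto
  have pF: "prob_space (F' x)" for x
    using ass unfolding F'_def I_def by (auto intro: prob_space_return)
  interpret pps: product_prob_space F' by (rule product_prob_spaceI[OF pF])
  have finI: "finite I" unfolding I_def by simp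
  interpret P: prob_space P unfolding PF by (rule prob_space_PiM[OF pF])
  define X where "X = (\<lambda>s (\<omega>::nat \<times> nat \<times> nat \<Rightarrow> real). \<omega> (i, m, s))"
  have inI: "(i, m, s) \<in> I" if "s \<in> {1..t}" for s using that im t unfolding I_def by auto
  have F'im: "F' (i, m, s) = \<nu> i m" if "s \<in> {1..t}" for s using inI[OF that] unfolding F'_def by simp
  have sets\<nu>: "sets (\<nu> i m) = sets borel" using ass im by auto
  have rv: "X s \<in> measurable P (F' (i, m, s))" if "s \<in> {1..t}" for s
    unfolding X_def PF by (rule measurable_component_singleton[OF inI[OF that]])
  have ind0: "P.indep_vars (\<lambda>s. F' (i, m, s)) X {1..t}"
  proof (subst P.indep_vars_iff_distr_eq_PiM')
    show "{1..t} \<noteq> {}" using t by simp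
    show "\<And>s. s \<in> {1..t} \<Longrightarrow> X s \<in> measurable P (F' (i, m, s))" by (rule rv)
    have "distr P (Pi\<^sub>M {1..t} (\<lambda>s. F' (i, m, s))) (\<lambda>x. \<lambda>s\<in>{1..t}. X s x)
        = PiM {1..t} (\<lambda>s. F' (i, m, s))"
      unfolding PF X_def
      by (rule pps.distr_reorder[of "\<lambda>s. (i, m, s)" "{1..t}" I, OF _ _ finI])
         (auto simp: inj_on_def inI)
    also have "\<dots> = PiM {1..t} (\<lambda>s. distr P (F' (i, m, s)) (X s))"
      by (rule PiM_cong[OF refl], unfold PF X_def, rule distr_PiM_component[symmetric, OF pF inI]) 
    finally show "distr P (Pi\<^sub>M {1..t} (\<lambda>s. F' (i, m, s))) (\<lambda>x. \<lambda>s\<in>{1..t}. X s x) =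
        PiM {1..t} (\<lambda>s. distr P (F' (i, m, s)) (X s))" .
  qed
  have ind: "P.indep_vars (\<lambda>_. borel) X {1..t}"
  proof -
    have "P.indep_vars (\<lambda>_. borel) (\<lambda>s x. (\<lambda>y. y) (X s x)) {1..t}"
    proof (rule P.indep_vars_compose2[OF ind0, where Y="\<lambda>_ y. y" and N="\<lambda>_. borel"])
      fix s assume s: "s \<in> {1..t}"
      show "(\<lambda>y. y) \<in> measurable (F' (i, m, s)) borel"
        by (rule measurable_ident_sets) (simp only: F'im[OF s] sets\<nu>)
    qed
    then show ?thesis .
  qed
  have AE: "AE \<omega> in P. X s \<omega> \<in> {0..1}" if s: "s \<in> {1..t}" for s
  proof -
    have "AE x in \<nu> i m. x \<in> {0..1}" using ass im by blast
    then have "AE x in F' (i, m, s). x \<in> {0..1}" unfolding F'im[OF s] .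
    then show ?thesis unfolding PF X_def by (rule AE_PiM_component[OF pF inI[OF s]])
  qed
  have HI: "Hoeffding_ineq P {1..t} X (\<lambda>_. 0) (\<lambda>_. 1)"
  proof -
    have "indep_interval_bounded_random_variables_axioms P {1..t} X (\<lambda>_. 0) (\<lambda>_. 1)"
      unfolding indep_interval_bounded_random_variables_axioms_def
    proof (intro conjI allI impI)
      show "finite {1..t}" by simp
      show "P.indep_vars (\<lambda>_. borel) X {1..t}" by (rule ind)
      fix s assume "s \<in> {1..t}"
      then show "AE x in P. X s x \<in> {0..1}" by (rule AE)
    qed
    then show "Hoeffding_ineq P {1..t} X (\<lambda>_. 0) (\<lambda>_. 1)"
      unfolding Hoeffding_ineq_def indep_interval_bounded_random_variables_def
      using P.prob_space_axioms by blast
  qed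
  have exp: "P.expectation (X s) = arm_mean \<nu> i m" if s: "s \<in> {1..t}" for s
  proof -
    have "P.expectation (X s) = integral\<^sup>L (distr P (F' (i, m, s)) (X s)) (\<lambda>x. x)"
      by (rule integral_distr[symmetric, OF rv[OF s]])
         (rule measurable_ident_sets, simp only: F'im[OF s] sets\<nu>)
    also have "distr P (F' (i, m, s)) (X s) = F' (i, m, s)"
      unfolding PF X_def by (rule distr_PiM_component[OF pF inI[OF s]])
    finally show ?thesis using F'im[OF s] unfolding arm_mean_def by simp
  qed
  have tpos: "real t > 0" using t by simp
  have H0: "P.prob {\<omega>\<in>space P. t * \<epsilon> \<le> \<bar>(\<Sum>s\<in>{1..t}. X s \<omega>) - (\<Sum>s\<in>{1..t}. P.expectation (X s))\<bar>}
      \<le> 2 * exp (-2 * (t * \<epsilon>)\<^sup>2 / (\<Sum>s\<in>{1..t}. ((\<lambda>_. 1::real) s - (\<lambda>_. 0) s)\<^sup>2))"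
    by (rule Hoeffding_ineq.Hoeffding_ineq_abs_ge[OF HI]) (use e t in auto)
  have sumexp: "(\<Sum>s\<in>{1..t}. P.expectation (X s)) = t * arm_mean \<nu> i m"
    using exp by simp
  have seteq: "{\<omega> \<in> space P. \<epsilon> \<le> \<bar>emp_mean \<omega> t i m - arm_mean \<nu> i m\<bar>}
     = {\<omega>\<in>space P. t * \<epsilon> \<le> \<bar>(\<Sum>s\<in>{1..t}. X s \<omega>) - (\<Sum>s\<in>{1..t}. P.expectation (X s))\<bar>}"
  proof -
    have "\<epsilon> \<le> \<bar>emp_mean \<omega> t i m - arm_mean \<nu> i m\<bar> \<longleftrightarrow>
          t * \<epsilon> \<le> \<bar>(\<Sum>s\<in>{1..t}. X s \<omega>) - t * arm_mean \<nu> i m\<bar>" for \<omega>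
    proof -
      have "emp_mean \<omega> t i m - arm_mean \<nu> i m = ((\<Sum>s\<in>{1..t}. X s \<omega>) - t * arm_mean \<nu> i m) / t"
        unfolding emp_mean_def X_def using tpos by (simp add: field_simps)
      then have "\<bar>(\<Sum>s\<in>{1..t}. X s \<omega>) - t * arm_mean \<nu> i m\<bar> = t * \<bar>emp_mean \<omega> t i m - arm_mean \<nu> i m\<bar>"
        using tpos by (simp add: abs_mult)
      then show ?thesis using mult_le_cancel_left_pos[OF tpos] by simp
    qed
    then show ?thesis unfolding sumexp by simp
  qed
  have "2 * exp (-2 * (t * \<epsilon>)\<^sup>2 / (\<Sum>s\<in>{1..t}. ((\<lambda>_. 1::real) s - (\<lambda>_. 0) s)\<^sup>2))
      = 2 * exp (-2 * real t * \<epsilon>\<^sup>2)"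
    using tpos by (simp add: power2_eq_square field_simps)
  then show ?thesis using H0 seteq unfolding P_def by simp
qed



definition cmpv :: "nat \<Rightarrow> nat \<Rightarrow> nat \<Rightarrow> (nat \<times> nat \<times> nat \<Rightarrow> real)
    \<Rightarrow> nat \<times> (nat \<times> nat) \<times> (nat \<times> nat) \<times> (nat \<times> nat) \<times> (nat \<times> nat) \<Rightarrow> bool" where
  "cmpv M K n \<omega> x = (case x of (k, a, b, c, d) \<Rightarrow>
     emp_mean \<omega> (sar_nk (M*K) n k) (fst a) (snd a) - emp_mean \<omega> (sar_nk (M*K) n k) (fst b) (snd b)
     \<le> emp_mean \<omega> (sar_nk (M*K) n k) (fst c) (snd c) - emp_mean \<omega> (sar_nk (M*K) n k) (fst d) (snd d))"

lemma hmem_gen: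
  fixes mu :: "nat \<Rightarrow> nat \<Rightarrow> real"
  assumes tH: "\<forall>k m S. finite S \<longrightarrow> S \<noteq> {} \<longrightarrow> tbH k m S \<in> S"
    and finA: "finite A" and im: "(i, m) \<in> A"
  shows "(tbH k m {i. (i, m) \<in> A \<and> (\<forall>j. (j, m) \<in> A \<longrightarrow> mu j m \<le> mu i m)}, m) \<in> A"
proof -
  let ?H = "{i. (i, m) \<in> A \<and> (\<forall>j. (j, m) \<in> A \<longrightarrow> mu j m \<le> mu i m)}"
  have fX: "finite {i. (i,m)\<in>A}"
    by (rule finite_subset[OF _ finite_imageI[OF finA, of fst]]) force
  have neX: "{i. (i,m)\<in>A} \<noteq> {}" using im by blast
  obtain i0 where i0: "i0 \<in> {i. (i,m)\<in>A}" "\<forall>j\<in>{i. (i,m)\<in>A}. mu j m \<le> mu i0 m"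
    using argmax_ex[OF fX neX, of "\<lambda>i. mu i m"] by blast
  have ne: "?H \<noteq> {}" using i0 by auto
  have fH: "finite ?H" using fX by (rule rev_finite_subset) auto
  have "tbH k m ?H \<in> ?H" using tH[rule_format, OF fH ne] .
  then show ?thesis by blast
qed

lemma step_cong:
  assumes tH: "\<forall>k m S. finite S \<longrightarrow> S \<noteq> {} \<longrightarrow> tbH k m S \<in> S"
    and AB: "A \<subseteq> {1..K} \<times> {1..M}"
    and agree: "\<forall>a\<in>{1..K} \<times> {1..M}. \<forall>b\<in>{1..K} \<times> {1..M}. \<forall>c\<in>{1..K} \<times> {1..M}. \<forall>d\<in>{1..K} \<times> {1..M}.
        cmpv M K n \<omega> (k, a, b, c, d) = cmpv M K n \<omega>' (k, a, b, c, d)"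
  shows "sar_step M K n tbH tbP tbR \<omega> k (A, J) = sar_step M K n tbH tbP tbR \<omega>' k (A, J)"
proof -
  define mu where "mu = (\<lambda>i m. emp_mean \<omega> (sar_nk (M * K) n k) i m)"
  define mu' where "mu' = (\<lambda>i m. emp_mean \<omega>' (sar_nk (M * K) n k) i m)"
  define Hs where "Hs = (\<lambda>m. {i. (i, m) \<in> A \<and> (\<forall>j. (j, m) \<in> A \<longrightarrow> mu j m \<le> mu i m)})"
  define Hs' where "Hs' = (\<lambda>m. {i. (i, m) \<in> A \<and> (\<forall>j. (j, m) \<in> A \<longrightarrow> mu' j m \<le> mu' i m)})"
  define h where "h = (\<lambda>m. tbH k m (Hs m))"
  define h' where "h' = (\<lambda>m. tbH k m (Hs' m))"
  define L where "L = {m. \<exists>i. (i, m) \<in> A \<and> (\<forall>j. (j, m) \<in> A \<longrightarrow> j = i)}"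
  define g where "g = (\<lambda>p. mu (h (snd p)) (snd p) - mu (fst p) (snd p))"
  define g' where "g' = (\<lambda>p. mu' (h' (snd p)) (snd p) - mu' (fst p) (snd p))"
  define S where "S = {p \<in> A. \<forall>q \<in> A. g q \<le> g p}"
  define S' where "S' = {p \<in> A. \<forall>q \<in> A. g' q \<le> g' p}"
  have st_eq: "sar_step M K n tbH tbP tbR \<omega> k (A, J) = (if L \<noteq> {} then (A - {(h (tbP k L), tbP k L)}, J(tbP k L := h (tbP k L)))
                      else (A - {tbR k S}, J))"
    unfolding sar_step_def Let_def mu_def Hs_def h_def L_def g_def S_def fst_conv snd_conv by (rule refl)
  have st_eq': "sar_step M K n tbH tbP tbR \<omega>' k (A, J) = (if L \<noteq> {} then (A - {(h' (tbP k L), tbP k L)}, J(tbP k L := h' (tbP k L)))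
                      else (A - {tbR k S'}, J))"
    unfolding sar_step_def Let_def mu'_def Hs'_def h'_def L_def g'_def S'_def fst_conv snd_conv by (rule refl)
  have finA: "finite A" using finite_subset[OF AB] by simp
  have ce: "(mu (fst a) (snd a) - mu (fst b) (snd b) \<le> mu (fst c) (snd c) - mu (fst d) (snd d))
        = (mu' (fst a) (snd a) - mu' (fst b) (snd b) \<le> mu' (fst c) (snd c) - mu' (fst d) (snd d))"
    if "a \<in> A" "b \<in> A" "c \<in> A" "d \<in> A" for a b c d
  proof -
    have "cmpv M K n \<omega> (k, a, b, c, d) = cmpv M K n \<omega>' (k, a, b, c, d)"
      using agree that AB by blast
    then show ?thesis unfolding cmpv_def mu_def mu'_def by simp
  qed
  have Hs_eq: "Hs = Hs'"
  proof
    fix m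
    have "(mu j m \<le> mu i m) = (mu' j m \<le> mu' i m)" if "(i, m) \<in> A" "(j, m) \<in> A" for i j
      using ce[OF that(2) that(2) that(1) that(2)] by simp
    then show "Hs m = Hs' m" unfolding Hs_def Hs'_def by blast
  qed
  have h_eq: "h = h'" unfolding h_def h'_def Hs_eq ..
  have hA: "(h (snd p), snd p) \<in> A" if "p \<in> A" for p
    unfolding h_def Hs_def using hmem_gen[OF tH finA, of "fst p" "snd p"] that by simp
  have "(g q \<le> g p) = (g' q \<le> g' p)" if "p \<in> A" "q \<in> A" for p q
    using ce[OF hA[OF that(2)] that(2) hA[OF that(1)] that(1)] unfolding g_def g'_def h_eq by simp
  then have S_eq: "S = S'" unfolding S_def S'_def by blast
  show ?thesis unfolding st_eq st_eq' h_eq S_eq ..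
qed

lemma state_subset:
  "fst (sar_state M K n tbH tbP tbR \<omega> k) \<subseteq> {1..K} \<times> {1..M}"
proof (induction k)
  case 0 then show ?case by simp
next
  case (Suc k)
  have "fst (sar_step M K n tbH tbP tbR \<omega> (Suc k) st) \<subseteq> fst st" for st
    unfolding sar_step_def Let_def by auto
  then show ?case using Suc by (metis sar_state.simps(2) subset_trans)
qed

lemma state_cong:
  assumes tH: "\<forall>k m S. finite S \<longrightarrow> S \<noteq> {} \<longrightarrow> tbH k m S \<in> S"
    and agree: "\<forall>x\<in>{1..M*K} \<times> ({1..K} \<times> {1..M}) \<times> ({1..K} \<times> {1..M}) \<times> ({1..K} \<times> {1..M}) \<times> ({1..K} \<times> {1..M}).
        cmpv M K n \<omega> x = cmpv M K n \<omega>' x"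
  shows "k \<le> M*K \<Longrightarrow> sar_state M K n tbH tbP tbR \<omega> k = sar_state M K n tbH tbP tbR \<omega>' k"
proof (induction k)
  case 0 then show ?case by simp
next
  case (Suc k)
  define st where "st = sar_state M K n tbH tbP tbR \<omega> k"
  have IH: "sar_state M K n tbH tbP tbR \<omega>' k = st" using Suc unfolding st_def by simp
  have k1: "Suc k \<in> {1..M*K}" using Suc.prems by simp
  have ag: "\<forall>a\<in>{1..K} \<times> {1..M}. \<forall>b\<in>{1..K} \<times> {1..M}. \<forall>c\<in>{1..K} \<times> {1..M}. \<forall>d\<in>{1..K} \<times> {1..M}.
        cmpv M K n \<omega> (Suc k, a, b, c, d) = cmpv M K n \<omega>' (Suc k, a, b, c, d)"
    using agree k1 by blast
  have AB: "fst st \<subseteq> {1..K} \<times> {1..M}" unfolding st_def by (rule state_subset)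
  have "sar_step M K n tbH tbP tbR \<omega> (Suc k) (fst st, snd st) = sar_step M K n tbH tbP tbR \<omega>' (Suc k) (fst st, snd st)"
    by (rule step_cong[OF tH AB ag])
  then show ?case using IH unfolding st_def by simp
qed

lemma output_cong:
  assumes tH: "\<forall>k m S. finite S \<longrightarrow> S \<noteq> {} \<longrightarrow> tbH k m S \<in> S"
    and agree: "\<forall>x\<in>{1..M*K} \<times> ({1..K} \<times> {1..M}) \<times> ({1..K} \<times> {1..M}) \<times> ({1..K} \<times> {1..M}) \<times> ({1..K} \<times> {1..M}).
        cmpv M K n \<omega> x = cmpv M K n \<omega>' x"
  shows "sar_output M K n tbH tbP tbR \<omega> = sar_output M K n tbH tbP tbR \<omega>'"
  unfolding sar_output_def using state_cong[OF tH agree, of "M*K - 1"] by simp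



lemma logbar_ge: "logbar N \<ge> 1/2"
  unfolding logbar_def by (simp add: sum_nonneg)

lemma gaps_facts:
  fixes M K :: nat
  assumes K2: "K \<ge> 2"
    and means: "\<forall>m\<in>{1..M}. \<forall>i j. 1 \<le> i \<longrightarrow> i < j \<longrightarrow> j \<le> K \<longrightarrow> arm_mean \<nu> j m < arm_mean \<nu> i m"
  shows "length (sorted_gaps \<nu> M K) = M * K"
    and "\<And>j. j < M * K \<Longrightarrow> sorted_gaps \<nu> M K ! j > 0"
proof -
  let ?B = "{1..K} \<times> {1..M}"
  let ?g = "\<lambda>p. gap \<nu> (fst p) (snd p)"
  have len: "length (sorted_gaps \<nu> M K) = card ?B"
  proof -
    have "length (sorted_gaps \<nu> M K) = size (mset (sorted_gaps \<nu> M K))" by (simp only: size_mset)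
    also have "\<dots> = card ?B" unfolding sorted_gaps_def
      by (simp only: mset_sorted_list_of_multiset size_image_mset size_mset_set)
    finally show ?thesis .
  qed
  then show "length (sorted_gaps \<nu> M K) = M * K" by (simp add: mult.commute)
  have gpos: "?g p > 0" if "p \<in> ?B" for p
  proof -
    obtain i m where p: "p = (i, m)" by (cases p)
    have im: "i \<in> {1..K}" "m \<in> {1..M}" using that p by auto
    show ?thesis
    proof (cases "i = 1")
      case True
      have "arm_mean \<nu> 2 m < arm_mean \<nu> 1 m" by (rule means[rule_format, OF im(2)]) (use K2 in auto)
      then show ?thesis using p True unfolding gap_def by simp
    next
      case False
      then have "1 < i" "i \<le> K" using im by auto
      then have "arm_mean \<nu> i m < arm_mean \<nu> 1 m" by (intro means[rule_format, OF im(2)]) auto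
      then show ?thesis using p False unfolding gap_def by simp
    qed
  qed
  fix j assume j: "j < M * K"
  have "sorted_gaps \<nu> M K ! j \<in> set (sorted_gaps \<nu> M K)"
    using j len by (simp add: mult.commute)
  also have "set (sorted_gaps \<nu> M K) = ?g ` ?B"
    unfolding sorted_gaps_def by simp
  finally show "sorted_gaps \<nu> M K ! j > 0" using gpos by auto
qed

lemma phase_facts:
  fixes M K n k :: nat
  assumes M1: "M \<ge> 1" and K2: "K \<ge> 2"
    and means: "\<forall>m\<in>{1..M}. \<forall>i j. 1 \<le> i \<longrightarrow> i < j \<longrightarrow> j \<le> K \<longrightarrow> arm_mean \<nu> j m < arm_mean \<nu> i m"
    and nN: "n > M * K" and k: "k \<in> {1..M*K-1}"
  shows "1 \<le> sar_nk (M*K) n k" "sar_nk (M*K) n k \<le> n"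
    "- 2 * real (sar_nk (M*K) n k) * (sorted_gaps \<nu> M K ! (M*K-k) / 4)\<^sup>2
       \<le> - (real n - real (M*K)) / (8 * logbar (M*K) * H2 \<nu> M K)"
proof -
  define N where "N = M * K"
  define L where "L = logbar N"
  define D where "D = sorted_gaps \<nu> M K ! (N - k)"
  define c where "c = real (N + 1 - k)"
  define v where "v = (1 / L) * ((real n - real N) / c)"
  have L: "L \<ge> 1/2" unfolding L_def by (rule logbar_ge)
  have kN: "1 \<le> k" "k \<le> N - 1" using k unfolding N_def by auto
  have c2: "c \<ge> 2" unfolding c_def using kN by auto
  have Lc: "L * c \<ge> 1"
  proof -
    have "L * c \<ge> (1/2) * 2" using L c2 by (intro mult_mono) auto
    then show ?thesis by simp
  qed
  have t_eq: "sar_nk N n k = nat \<lceil>v\<rceil>"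
    unfolding sar_nk_def v_def c_def L_def using kN by simp
  have "real N < real n" using nN unfolding N_def by (simp only: of_nat_less_iff)
  then have nN': "real n - real N > 0" by simp
  have vpos: "v > 0" unfolding v_def using L c2 nN' by simp
  have v_eq: "v = (real n - real N) / (L * c)" unfolding v_def by simp
  have v_le: "v \<le> real n - real N"
    unfolding v_eq using Lc nN' by (simp add: divide_le_eq mult_le_cancel_left1)
  have t1: "1 \<le> sar_nk N n k" unfolding t_eq using vpos by linarith
  have "\<lceil>v\<rceil> \<le> int n - int N" using v_le by (simp add: ceiling_le_iff)
  then have tn: "sar_nk N n k \<le> n" unfolding t_eq using nN unfolding N_def by linarith
  have tv: "real (sar_nk N n k) \<ge> v" unfolding t_eq by linarith
  have Dpos: "D > 0" unfolding D_def using gaps_facts(2)[OF K2 means] kN unfolding N_def by simp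
  have H2ge: "H2 \<nu> M K \<ge> c / D\<^sup>2"
  proof -
    have mem: "N + 1 - k \<in> {1..M * K}" using kN unfolding N_def by auto
    have "real (N + 1 - k) / (sorted_gaps \<nu> M K ! (N + 1 - k - 1))\<^sup>2 \<le> H2 \<nu> M K"
      unfolding H2_def by (rule Max_ge, simp, rule imageI[OF mem])
    moreover have "N + 1 - k - 1 = N - k" using kN by simp
    ultimately show ?thesis unfolding c_def D_def by simp
  qed
  have cpos: "c > 0" using c2 by simp
  have "c / D\<^sup>2 > 0" using cpos Dpos by simp
  then have H2pos: "H2 \<nu> M K > 0" using H2ge by linarith
  have h1: "c \<le> H2 \<nu> M K * D\<^sup>2" using H2ge Dpos by (simp add: divide_le_eq)
  have inv: "1 / H2 \<nu> M K \<le> D\<^sup>2 / c" using h1 H2pos cpos by (simp add: field_simps)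
  have "(real n - real N) / (L * H2 \<nu> M K) = (real n - real N) / L * (1 / H2 \<nu> M K)" by simp
  also have "\<dots> \<le> (real n - real N) / L * (D\<^sup>2 / c)"
    using inv nN' L by (intro mult_left_mono) auto
  also have "\<dots> = v * D\<^sup>2" unfolding v_def by simp
  also have "\<dots> \<le> real (sar_nk N n k) * D\<^sup>2" using tv by (intro mult_right_mono) auto
  finally have key: "(real n - real N) / (L * H2 \<nu> M K) \<le> real (sar_nk N n k) * D\<^sup>2" .
  define X where "X = (real n - real N) / (L * H2 \<nu> M K)"
  have e1: "- (real n - real N) / (8 * L * H2 \<nu> M K) = - X / 8"
    unfolding X_def using L H2pos by (simp add: field_simps)
  have e2: "- 2 * real (sar_nk N n k) * (D / 4)\<^sup>2 = - (real (sar_nk N n k) * D\<^sup>2) / 8"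
    by (simp add: power2_eq_square)
  have "- 2 * real (sar_nk N n k) * (D / 4)\<^sup>2 \<le> - (real n - real N) / (8 * L * H2 \<nu> M K)"
    unfolding e1 e2 using key unfolding X_def[symmetric] by simp
  then show "- 2 * real (sar_nk (M*K) n k) * (sorted_gaps \<nu> M K ! (M*K-k) / 4)\<^sup>2
       \<le> - (real n - real (M*K)) / (8 * logbar (M*K) * H2 \<nu> M K)"
    unfolding N_def[symmetric] L_def[symmetric] D_def[symmetric] by simp
  show "1 \<le> sar_nk (M*K) n k" using t1 unfolding N_def .
  show "sar_nk (M*K) n k \<le> n" using tn unfolding N_def .
qed



theorem theorem2:
  fixes M K n :: nat
    and \<nu> :: "nat \<Rightarrow> nat \<Rightarrow> real measure"
    and tbH :: "nat \<Rightarrow> nat \<Rightarrow> nat set \<Rightarrow> nat"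
    and tbP :: "nat \<Rightarrow> nat set \<Rightarrow> nat"
    and tbR :: "nat \<Rightarrow> (nat \<times> nat) set \<Rightarrow> nat \<times> nat"
  assumes "M \<ge> 1" and "K \<ge> 2" and "n \<ge> M * K"
    and "\<forall>i\<in>{1..K}. \<forall>m\<in>{1..M}. prob_space (\<nu> i m) \<and> sets (\<nu> i m) = sets borel
           \<and> (AE x in \<nu> i m. x \<in> {0..1})"
    and "\<forall>m\<in>{1..M}. \<forall>i j. 1 \<le> i \<longrightarrow> i < j \<longrightarrow> j \<le> K \<longrightarrow> arm_mean \<nu> j m < arm_mean \<nu> i m"
    and "\<forall>k m S. finite S \<longrightarrow> S \<noteq> {} \<longrightarrow> tbH k m S \<in> S"
    and "\<forall>k S. finite S \<longrightarrow> S \<noteq> {} \<longrightarrow> tbP k S \<in> S"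
    and "\<forall>k S. finite S \<longrightarrow> S \<noteq> {} \<longrightarrow> tbR k S \<in> S"
  shows "{\<omega> \<in> space (reward_space M K n \<nu>).
            \<exists>m\<in>{1..M}. sar_output M K n tbH tbP tbR \<omega> m \<noteq> 1} \<in> sets (reward_space M K n \<nu>)
       \<and> measure (reward_space M K n \<nu>)
           {\<omega> \<in> space (reward_space M K n \<nu>). \<exists>m\<in>{1..M}. sar_output M K n tbH tbP tbR \<omega> m \<noteq> 1}
         \<le> 2 * real M ^ 2 * real K ^ 2
             * exp (- (real n - real (M * K)) / (8 * logbar (M * K) * H2 \<nu> M K))"
proof -
  note M1 = assms(1) and K2 = assms(2) and nN = assms(3) and ass = assms(4) and means = assms(5)
    and tH = assms(6) and tP = assms(7) and tR = assms(8)
  define R where "R = reward_space M K n \<nu>"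
  define N where "N = M * K"
  define Box where "Box = {1..K} \<times> {1..M}"
  define Ev where "Ev = {\<omega> \<in> space R. \<exists>m\<in>{1..M}. sar_output M K n tbH tbP tbR \<omega> m \<noteq> 1}"
  define Dom where "Dom = {1..M*K} \<times> Box \<times> Box \<times> Box \<times> Box"
  have finDom: "finite Dom" unfolding Dom_def Box_def by simp
  have fm: "(\<lambda>\<omega>. emp_mean \<omega> t i m) \<in> borel_measurable R" for t i m
    unfolding R_def by (rule emp_meas[OF ass])
  have cmeas: "{\<omega>\<in>space R. cmpv M K n \<omega> x = b} \<in> sets R" for x b
  proof -
    obtain k a b' c d where x: "x = (k, a, b', c, d)" by (cases x) auto
    define t where "t = sar_nk (M*K) n k"
    define f where "f = (\<lambda>\<omega>. emp_mean \<omega> t (fst a) (snd a) - emp_mean \<omega> t (fst b') (snd b'))"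
    define g where "g = (\<lambda>\<omega>. emp_mean \<omega> t (fst c) (snd c) - emp_mean \<omega> t (fst d) (snd d))"
    have fM: "f \<in> borel_measurable R" unfolding f_def by (intro borel_measurable_diff fm)
    have gM: "g \<in> borel_measurable R" unfolding g_def by (intro borel_measurable_diff fm)
    have cm: "cmpv M K n \<omega> x = (f \<omega> \<le> g \<omega>)" for \<omega>
      unfolding cmpv_def x f_def g_def t_def by simp
    show ?thesis
    proof (cases b)
      case True
      have "{\<omega>\<in>space R. cmpv M K n \<omega> x = b} = {\<omega>\<in>space R. f \<omega> \<le> g \<omega>}" using True cm by simp
      then show ?thesis using borel_measurable_le[OF fM gM] by simp
    next
      case False
      have "{\<omega>\<in>space R. cmpv M K n \<omega> x = b} = {\<omega>\<in>space R. g \<omega> < f \<omega>}" using False cm by auto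
      then show ?thesis using borel_measurable_less[OF gM fM] by simp
    qed
  qed
  define W where "W = (\<lambda>\<omega>. restrict (cmpv M K n \<omega>) Dom) ` Ev"
  have finW: "finite W"
  proof (rule finite_subset)
    show "W \<subseteq> PiE Dom (\<lambda>_. UNIV)" unfolding W_def by auto
    show "finite (PiE Dom (\<lambda>_. (UNIV :: bool set)))" using finDom by (intro finite_PiE) auto
  qed
  have Ev_eq: "Ev = {\<omega> \<in> space R. \<exists>v\<in>W. \<forall>x\<in>Dom. cmpv M K n \<omega> x = v x}"
  proof
    show "Ev \<subseteq> {\<omega> \<in> space R. \<exists>v\<in>W. \<forall>x\<in>Dom. cmpv M K n \<omega> x = v x}"
      unfolding W_def Ev_def by force
    show "{\<omega> \<in> space R. \<exists>v\<in>W. \<forall>x\<in>Dom. cmpv M K n \<omega> x = v x} \<subseteq> Ev"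
    proof
      fix \<omega> assume "\<omega> \<in> {\<omega> \<in> space R. \<exists>v\<in>W. \<forall>x\<in>Dom. cmpv M K n \<omega> x = v x}"
      then obtain \<omega>0 where w: "\<omega> \<in> space R" "\<omega>0 \<in> Ev"
        and ag: "\<forall>x\<in>Dom. cmpv M K n \<omega> x = restrict (cmpv M K n \<omega>0) Dom x"
        unfolding W_def by blast
      have ag': "\<forall>x\<in>Dom. cmpv M K n \<omega> x = cmpv M K n \<omega>0 x" using ag by simp
      have "sar_output M K n tbH tbP tbR \<omega> = sar_output M K n tbH tbP tbR \<omega>0"
        by (rule output_cong[OF tH]) (use ag' in \<open>simp add: Dom_def Box_def\<close>)
      then show "\<omega> \<in> Ev" using w unfolding Ev_def by simp
    qed
  qed
  have Ev_sets: "Ev \<in> sets R"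
    unfolding Ev_eq
    by (intro sets.sets_Collect_finite_Ex[OF _ finW] sets.sets_Collect_finite_All[OF _ finDom] cmeas)
  have pR: "prob_space R"
    unfolding R_def reward_space_def by (rule prob_space_PiM) (use ass in auto)
  interpret R: prob_space R by (rule pR)
  have bound: "measure R Ev \<le> 2 * real M ^ 2 * real K ^ 2
             * exp (- (real n - real (M * K)) / (8 * logbar (M * K) * H2 \<nu> M K))"
  proof (cases "n = M * K")
    case True
    have p1: "measure R Ev \<le> 1" by (rule R.prob_le_1)
    have c1: "1 \<le> 2 * real M ^ 2 * real K ^ 2"
    proof -
      have "1 \<le> real M ^ 2" using M1 by simp
      moreover have "1 \<le> real K ^ 2" using K2 by simp
      ultimately have "1 \<le> real M ^ 2 * real K ^ 2" using one_le_power by (metis mult_mono' mult_1 zero_le_one)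
      then show ?thesis by simp
    qed
    have e1: "exp (- (real n - real (M * K)) / (8 * logbar (M * K) * H2 \<nu> M K)) = 1"
      using True by simp
    show ?thesis unfolding e1 using p1 c1 by linarith
  next
    case False
    then have gt: "n > M * K" using nN by simp
    define E0 where "E0 = - (real n - real (M * K)) / (8 * logbar (M * K) * H2 \<nu> M K)"
    define Idx where "Idx = Box \<times> {1..M*K-1}"
    define Bad where "Bad = (\<lambda>x::(nat\<times>nat)\<times>nat. {\<omega>\<in>space R. sorted_gaps \<nu> M K ! (M*K - snd x) / 4
       \<le> \<bar>emp_mean \<omega> (sar_nk (M*K) n (snd x)) (fst (fst x)) (snd (fst x)) - arm_mean \<nu> (fst (fst x)) (snd (fst x))\<bar>})"
    have finIdx: "finite Idx" unfolding Idx_def Box_def by simp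
    have Bad_sets: "Bad x \<in> sets R" for x
      unfolding Bad_def
      by (intro borel_measurable_le measurable_const borel_measurable_abs borel_measurable_diff fm) simp_all
    have sub: "Ev \<subseteq> \<Union> (Bad ` Idx)"
    proof
      fix \<omega> assume w: "\<omega> \<in> Ev"
      show "\<omega> \<in> \<Union> (Bad ` Idx)"
      proof (rule ccontr)
        assume nb: "\<omega> \<notin> \<Union> (Bad ` Idx)"
        have wR: "\<omega> \<in> space R" using w unfolding Ev_def by blast
        have good: "\<forall>k\<in>{1..M*K-1}. \<forall>i\<in>{1..K}. \<forall>m\<in>{1..M}.
          \<bar>emp_mean \<omega> (sar_nk (M*K) n k) i m - arm_mean \<nu> i m\<bar> < sorted_gaps \<nu> M K ! (M*K - k) / 4"
        proof (intro ballI)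
          fix k i m assume k: "k \<in> {1..M*K-1}" and i: "i \<in> {1..K}" and m: "m \<in> {1..M}"
          have "((i, m), k) \<in> Idx" using k i m unfolding Idx_def Box_def by simp
          then have "\<omega> \<notin> Bad ((i, m), k)" using nb by blast
          then show "\<bar>emp_mean \<omega> (sar_nk (M*K) n k) i m - arm_mean \<nu> i m\<bar> < sorted_gaps \<nu> M K ! (M*K - k) / 4"
            using wR unfolding Bad_def by auto
        qed
        have "\<forall>m\<in>{1..M}. sar_output M K n tbH tbP tbR \<omega> m = 1"
          using det[OF M1 K2 means tH tP tR good] by blast
        then show False using w unfolding Ev_def by blast
      qed
    qed
    have each: "measure R (Bad x) \<le> 2 * exp E0" if x: "x \<in> Idx" for x
    proof -
      obtain i m k where xe: "x = ((i, m), k)" by (cases x) auto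
      have im: "i \<in> {1..K}" "m \<in> {1..M}" and k: "k \<in> {1..M*K-1}"
        using x unfolding xe Idx_def Box_def by auto
      note pf = phase_facts[OF M1 K2 means gt k]
      have Dpos: "sorted_gaps \<nu> M K ! (M*K - k) > 0"
        by (rule gaps_facts(2)[OF K2 means]) (use k in auto)
      have "measure R (Bad x) \<le> 2 * exp (-2 * real (sar_nk (M*K) n k) * (sorted_gaps \<nu> M K ! (M*K - k) / 4)\<^sup>2)"
        unfolding Bad_def xe R_def fst_conv snd_conv using Dpos
        by (intro hoeff_arm[OF ass im pf(1) pf(2)]) simp
      also have "\<dots> \<le> 2 * exp E0" unfolding E0_def using pf(3) by simp
      finally show ?thesis .
    qed
    have "measure R Ev \<le> measure R (\<Union> (Bad ` Idx))"
      by (rule R.finite_measure_mono[OF sub]) (use finIdx Bad_sets in auto)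
    also have "\<dots> \<le> (\<Sum>x\<in>Idx. measure R (Bad x))"
      by (rule measure_UNION_le[OF finIdx Bad_sets])
    also have "\<dots> \<le> real (card Idx) * (2 * exp E0)"
      using each by (rule sum_bounded_above)
    also have "\<dots> \<le> (real M ^ 2 * real K ^ 2) * (2 * exp E0)"
    proof (rule mult_right_mono)
      have "card Idx = K * M * (M*K - 1)" unfolding Idx_def Box_def by (simp add: card_cartesian_product)
      also have "\<dots> \<le> K * M * (M * K)" by simp
      finally have "card Idx \<le> M^2 * K^2" by (simp add: power2_eq_square mult.commute mult.left_commute)
      then have "real (card Idx) \<le> real (M^2 * K^2)" by (simp only: of_nat_le_iff)
      then show "real (card Idx) \<le> real M ^ 2 * real K ^ 2" by simp
    qed simp
    also have "\<dots> = 2 * real M ^ 2 * real K ^ 2 * exp E0" by simp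
    finally show ?thesis unfolding E0_def .
  qed
  show ?thesis using Ev_sets bound unfolding Ev_def R_def by simp
qed

end
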